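(* If $I$ is a 1-absorbing primary hyperideal of $R$, then $\sqrt{I}$ is a prime hyperideal of $R$.
   Context: Throughout, $R$ is a commutative multiplicative hyperring ($(R,+)$ abelian group, $\circ$ a commutative associative hyperoperation into nonempty subsets, $a\circ(b+c)\subseteq a\circ b+a\circ c$, $a\circ(-b)=(-a)\circ b=-(a\circ b)$), with identity $1$ ($a\in a\circ 1$); $x$ is a unit if $1\in x\circ y$ for some $y$. All hyperideals are $\mathbf{C}$-hyperideals (for any finite product $A=r_1\circ\cdots\circ r_n$, $A\cap I\neq\emptyset\Rightarrow A\subseteq I$). A prime hyperideal is a proper $P$ with $x\circ y\subseteq P\Rightarrow x\in P$ or $y\in P$. $\sqrt I$ is the intersection of the prime hyperideals containing $I$, equal to $\{r: r^n\subseteq I\text{ for some }n\}$. A 1-absorbing primary hyperideal is a proper hyperideal $I$ such that for all nonunit $x,y,z\in R$, $x\circ y\circ z\subseteq I$ implies $x\circ y\subseteq I$ or $z\in\sqrt I$. *)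

theory Defs
  imports Main
begin

text \<open>A multiplicative hyperring: the additive group is the type class ab_group_add on 'a
  (the whole type is R), and the hyperoperation is a function m :: 'a => 'a => 'a set.\<close>

definition setmult :: "('a \<Rightarrow> 'a \<Rightarrow> 'a set) \<Rightarrow> 'a set \<Rightarrow> 'a set \<Rightarrow> 'a set" where
  "setmult m A B = (\<Union>a\<in>A. \<Union>b\<in>B. m a b)"

definition setsum :: "'a::ab_group_add set \<Rightarrow> 'a set \<Rightarrow> 'a set" where
  "setsum A B = {x + y | x y. x \<in> A \<and> y \<in> B}"

text \<open>Finite hyperproduct r1 o r2 o ... o rn (n >= 1); the empty product is never used.\<close>
fun hprod :: "('a \<Rightarrow> 'a \<Rightarrow> 'a set) \<Rightarrow> 'a list \<Rightarrow> 'a set" where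
  "hprod m [] = {}"
| "hprod m [r] = {r}"
| "hprod m (r # s # rs) = setmult m {r} (hprod m (s # rs))"

definition hpow :: "('a \<Rightarrow> 'a \<Rightarrow> 'a set) \<Rightarrow> 'a \<Rightarrow> nat \<Rightarrow> 'a set" where
  "hpow m r n = hprod m (replicate n r)"

definition mult_hyperring :: "('a::ab_group_add \<Rightarrow> 'a \<Rightarrow> 'a set) \<Rightarrow> bool" where
  "mult_hyperring m \<longleftrightarrow>
     (\<forall>a b. m a b \<noteq> {}) \<and>
     (\<forall>a b. m a b = m b a) \<and>
     (\<forall>a b c. setmult m (m a b) {c} = setmult m {a} (m b c)) \<and>
     (\<forall>a b c. m a (b + c) \<subseteq> setsum (m a b) (m a c)) \<and>
     (\<forall>a b. m a (- b) = uminus ` (m a b) \<and> m (- a) b = uminus ` (m a b))"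

definition hyperring_identity :: "('a \<Rightarrow> 'a \<Rightarrow> 'a set) \<Rightarrow> 'a \<Rightarrow> bool" where
  "hyperring_identity m u \<longleftrightarrow> (\<forall>a. a \<in> m a u)"

definition hunit :: "('a \<Rightarrow> 'a \<Rightarrow> 'a set) \<Rightarrow> 'a \<Rightarrow> 'a \<Rightarrow> bool" where
  "hunit m u x \<longleftrightarrow> (\<exists>y. u \<in> m x y)"

definition hyperideal :: "('a::ab_group_add \<Rightarrow> 'a \<Rightarrow> 'a set) \<Rightarrow> 'a set \<Rightarrow> bool" where
  "hyperideal m I \<longleftrightarrow> I \<noteq> {} \<and> (\<forall>x\<in>I. \<forall>y\<in>I. x - y \<in> I) \<and>
     (\<forall>r a. a \<in> I \<longrightarrow> m r a \<subseteq> I)"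

definition C_hyperideal :: "('a::ab_group_add \<Rightarrow> 'a \<Rightarrow> 'a set) \<Rightarrow> 'a set \<Rightarrow> bool" where
  "C_hyperideal m I \<longleftrightarrow> hyperideal m I \<and>
     (\<forall>rs. hprod m rs \<inter> I \<noteq> {} \<longrightarrow> hprod m rs \<subseteq> I)"

definition prime_hyperideal :: "('a::ab_group_add \<Rightarrow> 'a \<Rightarrow> 'a set) \<Rightarrow> 'a set \<Rightarrow> bool" where
  "prime_hyperideal m P \<longleftrightarrow> hyperideal m P \<and> P \<noteq> UNIV \<and>
     (\<forall>x y. m x y \<subseteq> P \<longrightarrow> x \<in> P \<or> y \<in> P)"

text \<open>Radical, via the characterization r^n \<subseteq> I for some n >= 1.\<close>
definition hrad :: "('a \<Rightarrow> 'a \<Rightarrow> 'a set) \<Rightarrow> 'a set \<Rightarrow> 'a set" where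
  "hrad m I = {r. \<exists>n\<ge>1. hpow m r n \<subseteq> I}"

definition one_absorbing_primary :: "('a::ab_group_add \<Rightarrow> 'a \<Rightarrow> 'a set) \<Rightarrow> 'a \<Rightarrow> 'a set \<Rightarrow> bool" where
  "one_absorbing_primary m u I \<longleftrightarrow> hyperideal m I \<and> I \<noteq> UNIV \<and>
     (\<forall>x y z. \<not> hunit m u x \<longrightarrow> \<not> hunit m u y \<longrightarrow> \<not> hunit m u z \<longrightarrow>
        hprod m [x, y, z] \<subseteq> I \<longrightarrow> m x y \<subseteq> I \<or> z \<in> hrad m I)"

end

theory Submission
  imports Defs "HOL-Library.Multiset"
begin

lemma setmult_mono:
  "A \<subseteq> A' \<Longrightarrow> B \<subseteq> B' \<Longrightarrow> setmult m A B \<subseteq> setmult m A' B'"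
  unfolding setmult_def by blast

lemma setmult_single: "setmult m {a} {b} = m a b"
  unfolding setmult_def by simp

lemma setmult_empty: "setmult m A {} = {}" "setmult m {} A = {}"
  unfolding setmult_def by auto

lemma mh_facts:
  assumes "mult_hyperring m"
  shows mh_ne: "\<And>a b. m a b \<noteq> {}"
    and mh_comm: "\<And>a b. m a b = m b a"
    and mh_assoc: "\<And>a b c. setmult m (m a b) {c} = setmult m {a} (m b c)"
    and mh_distr: "\<And>a b c. m a (b + c) \<subseteq> setsum (m a b) (m a c)"
    and mh_neg1: "\<And>a b. m a (- b) = uminus ` (m a b)"
    and mh_neg2: "\<And>a b. m (- a) b = uminus ` (m a b)"
proof -
  have A: "(\<forall>a b. m a b \<noteq> {}) \<and>
     (\<forall>a b. m a b = m b a) \<and>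
     (\<forall>a b c. setmult m (m a b) {c} = setmult m {a} (m b c)) \<and>
     (\<forall>a b c. m a (b + c) \<subseteq> setsum (m a b) (m a c)) \<and>
     (\<forall>a b. m a (- b) = uminus ` (m a b) \<and> m (- a) b = uminus ` (m a b))"
    using assms unfolding mult_hyperring_def by assumption
  show "\<And>a b. m a b \<noteq> {}" using A by (elim conjE allE) 
  show "\<And>a b. m a b = m b a" using A by (elim conjE allE) 
  show "\<And>a b c. setmult m (m a b) {c} = setmult m {a} (m b c)" using A by (elim conjE allE)
  show "\<And>a b c. m a (b + c) \<subseteq> setsum (m a b) (m a c)" using A by (elim conjE allE)
  show "\<And>a b. m a (- b) = uminus ` (m a b)" using A by (elim conjE allE)
  show "\<And>a b. m (- a) b = uminus ` (m a b)" using A by (elim conjE allE)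
qed

lemma setmult_comm:
  assumes H: "mult_hyperring m"
  shows "setmult m A B = setmult m B A"
proof -
  have c: "\<And>a b. m a b = m b a" using mh_comm[OF H] .
  have "(\<Union>a\<in>A. \<Union>b\<in>B. m a b) = (\<Union>a\<in>A. \<Union>b\<in>B. m b a)" using c by simp
  also have "\<dots> = (\<Union>b\<in>B. \<Union>a\<in>A. m b a)" by auto
  finally show ?thesis unfolding setmult_def .
qed

lemma setmult_assoc:
  assumes H: "mult_hyperring m"
  shows "setmult m (setmult m A B) C = setmult m A (setmult m B C)"
proof -
  have ax: "\<And>a b c. setmult m (m a b) {c} = setmult m {a} (m b c)"
    using mh_assoc[OF H] .
  have L: "setmult m (setmult m A B) C = (\<Union>a\<in>A. \<Union>b\<in>B. \<Union>c\<in>C. setmult m (m a b) {c})"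
    unfolding setmult_def by (auto simp: UN_UN_flatten)
  have R: "setmult m A (setmult m B C) = (\<Union>a\<in>A. \<Union>b\<in>B. \<Union>c\<in>C. setmult m {a} (m b c))"
    unfolding setmult_def by (auto simp: UN_UN_flatten)
  show ?thesis by (simp only: L R ax)
qed

lemma hprod_Cons: "hprod m (z # l) = (if l = [] then {z} else setmult m {z} (hprod m l))"
  by (cases l) auto

lemma hprod_append:
  assumes H: "mult_hyperring m"
  shows "xs \<noteq> [] \<Longrightarrow> ys \<noteq> [] \<Longrightarrow> hprod m (xs @ ys) = setmult m (hprod m xs) (hprod m ys)"
proof (induction xs)
  case Nil then show ?case by simp
next
  case (Cons z xs)
  show ?case
  proof (cases "xs = []")
    case True then show ?thesis using Cons by (simp add: hprod_Cons)
  next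
    case False
    have "hprod m ((z # xs) @ ys) = setmult m {z} (hprod m (xs @ ys))"
      using Cons False by (simp add: hprod_Cons)
    also have "\<dots> = setmult m {z} (setmult m (hprod m xs) (hprod m ys))"
      using Cons False by simp
    also have "\<dots> = setmult m (setmult m {z} (hprod m xs)) (hprod m ys)"
      using setmult_assoc[OF H] by simp
    finally show ?thesis using False by (simp add: hprod_Cons)
  qed
qed

lemma hprod_swap:
  assumes H: "mult_hyperring m"
  shows "hprod m (xs @ ys) = hprod m (ys @ xs)"
  by (cases "xs = []"; cases "ys = []")
     (auto simp: hprod_append[OF H] setmult_comm[OF H])

lemma hprod_perm:
  assumes H: "mult_hyperring m"
  shows "mset xs = mset ys \<Longrightarrow> hprod m xs = hprod m ys"
proof (induction xs arbitrary: ys)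
  case Nil then show ?case by (simp add: mset_zero_iff_right)
next
  case (Cons z xs)
  have "z \<in> set ys" using Cons.prems by (metis list.set_intros(1) set_mset_mset)
  then obtain p q where ys: "ys = p @ z # q" by (meson split_list)
  have "hprod m ys = hprod m ((z # q) @ p)" using ys hprod_swap[OF H] by metis
  also have "\<dots> = hprod m (z # (q @ p))" by simp
  finally have e1: "hprod m ys = hprod m (z # (q @ p))" .
  have "mset xs = mset (q @ p)" using Cons.prems ys by (simp add: union_commute)
  then have e2: "hprod m xs = hprod m (q @ p)" using Cons.IH by blast
  have "xs = [] \<longleftrightarrow> q @ p = []" using \<open>mset xs = mset (q @ p)\<close> by (metis mset_zero_iff)
  then show ?case using e1 e2 by (simp add: hprod_Cons)
qed

lemma hprod_nonempty:
  assumes H: "mult_hyperring m"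
  shows "xs \<noteq> [] \<Longrightarrow> hprod m xs \<noteq> {}"
proof (induction xs)
  case Nil then show ?case by simp
next
  case (Cons z xs)
  have ne: "\<And>a b. m a b \<noteq> {}" using mh_ne[OF H] .
  show ?case
  proof (cases "xs = []")
    case False
    then obtain w where "w \<in> hprod m xs" using Cons by blast
    then show ?thesis using False ne unfolding hprod_Cons setmult_def by auto
  qed simp
qed


lemma hyperideal_props:
  assumes "hyperideal m I"
  shows "0 \<in> I" "\<And>x. x \<in> I \<Longrightarrow> - x \<in> I" "\<And>x y. x \<in> I \<Longrightarrow> y \<in> I \<Longrightarrow> x + y \<in> I"
    "\<And>r a. a \<in> I \<Longrightarrow> m r a \<subseteq> I"
proof -
  have ne: "I \<noteq> {}" and sub: "\<And>x y. x \<in> I \<Longrightarrow> y \<in> I \<Longrightarrow> x - y \<in> I"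
    and ab: "\<And>r a. a \<in> I \<Longrightarrow> m r a \<subseteq> I"
    using assms unfolding hyperideal_def by auto
  obtain i where "i \<in> I" using ne by blast
  then show z: "0 \<in> I" using sub[of i i] by simp
  show n: "\<And>x. x \<in> I \<Longrightarrow> - x \<in> I" using sub[OF z] by fastforce
  show "\<And>x y. x \<in> I \<Longrightarrow> y \<in> I \<Longrightarrow> x + y \<in> I" using sub n by (metis diff_minus_eq_add)
  show "\<And>r a. a \<in> I \<Longrightarrow> m r a \<subseteq> I" by (rule ab)
qed

lemma setmult_absorb:
  assumes H: "mult_hyperring m" and I: "hyperideal m I" and J: "J \<subseteq> I"
  shows "setmult m B J \<subseteq> I" "setmult m J B \<subseteq> I"
proof -
  show "setmult m B J \<subseteq> I" using J hyperideal_props(4)[OF I] unfolding setmult_def by blast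
  then show "setmult m J B \<subseteq> I" using setmult_comm[OF H] by metis
qed

lemma hpow_Suc:
  "n \<ge> 1 \<Longrightarrow> hpow m r (Suc n) = setmult m {r} (hpow m r n)"
  unfolding hpow_def by (cases n) (auto simp: hprod_Cons)

lemma hpow_one: "hpow m r 1 = {r}" "hpow m r (Suc 0) = {r}"
  unfolding hpow_def by simp_all

lemma hpow_add:
  assumes H: "mult_hyperring m"
  shows "a \<ge> 1 \<Longrightarrow> b \<ge> 1 \<Longrightarrow> hpow m r (a + b) = setmult m (hpow m r a) (hpow m r b)"
  unfolding hpow_def by (simp add: replicate_add hprod_append[OF H])

lemma hpow_nonempty:
  assumes H: "mult_hyperring m"
  shows "n \<ge> 1 \<Longrightarrow> hpow m r n \<noteq> {}"
  unfolding hpow_def using hprod_nonempty[OF H] by simp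

lemma C_hpow:
  assumes C: "C_hyperideal m I" and "hpow m r n \<inter> I \<noteq> {}"
  shows "hpow m r n \<subseteq> I"
  using assms unfolding C_hyperideal_def hpow_def by blast

lemma hpow_pow:
  assumes H: "mult_hyperring m" and a: "a \<in> hpow m x k" and k: "k \<ge> 1"
  shows "j \<ge> 1 \<Longrightarrow> hpow m a j \<subseteq> hpow m x (k * j)"
proof (induction j rule: nat_induct_at_least)
  case base then show ?case using a by (simp add: hpow_one)
next
  case (Suc j)
  have "hpow m a (Suc j) = setmult m {a} (hpow m a j)" using Suc by (simp add: hpow_Suc)
  also have "\<dots> \<subseteq> setmult m (hpow m x k) (hpow m x (k * j))"
    using Suc a by (intro setmult_mono) auto
  also have "\<dots> = hpow m x (k + k * j)" using hpow_add[OF H, of k "k*j"] k Suc by simp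
  finally show ?case by simp
qed

lemma hpow_prod:
  assumes H: "mult_hyperring m" and c: "c \<in> m x y"
  shows "k \<ge> 1 \<Longrightarrow> hpow m c k \<subseteq> hprod m (replicate k x @ replicate k y)"
proof (induction k rule: nat_induct_at_least)
  case base then show ?case using c by (simp add: hpow_one setmult_single)
next
  case (Suc k)
  have "hpow m c (Suc k) = setmult m {c} (hpow m c k)" using Suc by (simp add: hpow_Suc)
  also have "\<dots> \<subseteq> setmult m (hprod m [x, y]) (hprod m (replicate k x @ replicate k y))"
    using Suc c by (intro setmult_mono) (auto simp: setmult_single)
  also have "\<dots> = hprod m ([x, y] @ (replicate k x @ replicate k y))"
    using Suc by (subst hprod_append[OF H]) auto
  also have "\<dots> = hprod m (replicate (Suc k) x @ replicate (Suc k) y)"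
    by (rule hprod_perm[OF H]) simp
  finally show ?case .
qed

lemma hpow_neg:
  assumes H: "mult_hyperring m"
  shows "n \<ge> 1 \<Longrightarrow> hpow m (- q) n \<subseteq> hpow m q n \<union> uminus ` hpow m q n"
proof (induction n rule: nat_induct_at_least)
  case base then show ?case by (simp add: hpow_one)
next
  case (Suc n)
  have neg: "\<And>a b. m a (- b) = uminus ` (m a b) \<and> m (- a) b = uminus ` (m a b)"
    using mh_neg1[OF H] mh_neg2[OF H] by simp
  show ?case
  proof
    fix z assume "z \<in> hpow m (- q) (Suc n)"
    then obtain w where w: "w \<in> hpow m (- q) n" and z: "z \<in> m (- q) w"
      using Suc by (auto simp: hpow_Suc setmult_def)
    have S: "hpow m q (Suc n) = setmult m {q} (hpow m q n)" using Suc by (simp add: hpow_Suc)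
    from w Suc.IH have "w \<in> hpow m q n \<or> (\<exists>v \<in> hpow m q n. w = - v)" by auto
    then show "z \<in> hpow m q (Suc n) \<union> uminus ` hpow m q (Suc n)"
    proof
      assume "w \<in> hpow m q n"
      then have "z \<in> uminus ` m q w" using z neg by simp
      then show ?thesis using S \<open>w \<in> hpow m q n\<close> unfolding setmult_def by auto
    next
      assume "\<exists>v \<in> hpow m q n. w = - v"
      then obtain v where v: "v \<in> hpow m q n" "w = - v" by blast
      have "m (- q) (- v) = m q v" using neg by (simp add: image_image)
      then have "z \<in> m q v" using z v by simp
      then show ?thesis using S v unfolding setmult_def by auto
    qed
  qed
qed


inductive_set addclos :: "'a::ab_group_add set \<Rightarrow> 'a set" for S where
  base: "s \<in> S \<Longrightarrow> s \<in> addclos S"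
| plus: "a \<in> addclos S \<Longrightarrow> b \<in> addclos S \<Longrightarrow> a + b \<in> addclos S"
| neg: "a \<in> addclos S \<Longrightarrow> - a \<in> addclos S"

lemma addclos_sub:
  assumes I: "hyperideal m I" and S: "S \<subseteq> I"
  shows "z \<in> addclos S \<Longrightarrow> z \<in> I"
  by (induction rule: addclos.induct) (use S hyperideal_props[OF I] in auto)

definition words :: "('a \<Rightarrow> 'a \<Rightarrow> 'a set) \<Rightarrow> 'a \<Rightarrow> 'a \<Rightarrow> nat \<Rightarrow> 'a set" where
  "words m x y n = {z. \<exists>ws. length ws = n \<and> set ws \<subseteq> {x, y} \<and> z \<in> hprod m ws}"

lemma words_step:
  assumes H: "mult_hyperring m" and n: "n \<ge> 1" and v: "v \<in> {x, y}"
  shows "w \<in> addclos (words m x y n) \<Longrightarrow> m v w \<subseteq> addclos (words m x y (Suc n))"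
proof (induction rule: addclos.induct)
  case (base s)
  then obtain ws where ws: "length ws = n" "set ws \<subseteq> {x, y}" "s \<in> hprod m ws"
    unfolding words_def by blast
  have "ws \<noteq> []" using ws n by auto
  then have "m v s \<subseteq> hprod m (v # ws)" using ws(3) by (auto simp: hprod_Cons setmult_def)
  moreover have "length (v # ws) = Suc n" "set (v # ws) \<subseteq> {x, y}" using ws v by auto
  ultimately have "m v s \<subseteq> words m x y (Suc n)" unfolding words_def by blast
  then show ?case by (auto intro: addclos.base)
next
  case (plus a b)
  show ?case
  proof
    fix z assume "z \<in> m v (a + b)"
    then have "z \<in> setsum (m v a) (m v b)" using mh_distr[OF H] by blast
    then obtain p q where "z = p + q" "p \<in> m v a" "q \<in> m v b" unfolding setsum_def by blast
    then show "z \<in> addclos (words m x y (Suc n))" using plus.IH by (auto intro: addclos.plus)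
  qed
next
  case (neg a)
  then show ?case using mh_neg1[OF H, of v a] by (auto intro: addclos.neg)
qed

lemma hpow_sum_addclos:
  assumes H: "mult_hyperring m"
  shows "n \<ge> 1 \<Longrightarrow> hpow m (x + y) n \<subseteq> addclos (words m x y n)"
proof (induction n rule: nat_induct_at_least)
  case base
  have "x \<in> words m x y 1" unfolding words_def by (rule CollectI, rule exI[of _ "[x]"]) simp
  moreover have "y \<in> words m x y 1" unfolding words_def by (rule CollectI, rule exI[of _ "[y]"]) simp
  ultimately show ?case by (auto simp: hpow_one intro: addclos.plus addclos.base)
next
  case (Suc n)
  show ?case
  proof
    fix z assume "z \<in> hpow m (x + y) (Suc n)"
    then obtain w where w: "w \<in> hpow m (x + y) n" and z: "z \<in> m (x + y) w"
      using Suc by (auto simp: hpow_Suc setmult_def)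
    have wa: "w \<in> addclos (words m x y n)" using w Suc.IH by blast
    have "z \<in> m w (x + y)" using z mh_comm[OF H] by metis
    then have "z \<in> setsum (m w x) (m w y)" using mh_distr[OF H] by blast
    then obtain p q where pq: "z = p + q" "p \<in> m w x" "q \<in> m w y" unfolding setsum_def by blast
    have "p \<in> m x w" "q \<in> m y w" using pq mh_comm[OF H] by metis+
    then have "p \<in> addclos (words m x y (Suc n))" "q \<in> addclos (words m x y (Suc n))"
      using words_step[OF H Suc.hyps _ wa] by blast+
    then show "z \<in> addclos (words m x y (Suc n))" using pq by (auto intro: addclos.plus)
  qed
qed

lemma count_split:
  "count (mset ws) x \<ge> a \<Longrightarrow> \<exists>rest. mset ws = mset (replicate a x @ rest)"
proof (induction a arbitrary: ws)
  case 0 then show ?case by auto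
next
  case (Suc a)
  have "x \<in> set ws"
  proof (rule ccontr)
    assume "x \<notin> set ws"
    then have "x \<notin># mset ws" by simp
    then have "count (mset ws) x = 0" by (simp add: not_in_iff)
    then show False using Suc.prems by linarith
  qed
  then have xi: "x \<in># mset ws" by simp
  have r1: "mset (remove1 x ws) = mset ws - {#x#}" by (rule mset_remove1)
  have e: "mset ws = add_mset x (mset ws - {#x#})" using xi by (rule insert_DiffM[symmetric])
  have "count (mset ws - {#x#}) x \<ge> a" using Suc.prems by simp
  then have "count (mset (remove1 x ws)) x \<ge> a" by (simp only: r1)
  then obtain rest where "mset (remove1 x ws) = mset (replicate a x @ rest)" using Suc.IH by blast
  then have "mset ws - {#x#} = mset (replicate a x @ rest)" by (simp only: r1)
  then have "mset ws = add_mset x (mset (replicate a x @ rest))" using e by simp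
  then show ?case by (intro exI[of _ rest]) simp
qed

lemma word_in_ideal:
  assumes H: "mult_hyperring m" and I: "hyperideal m I" and a: "a \<ge> 1"
    and xa: "hpow m x a \<subseteq> I" and c: "count (mset ws) x \<ge> a"
  shows "hprod m ws \<subseteq> I"
proof -
  obtain rest where r: "mset ws = mset (replicate a x @ rest)" using count_split[OF c] by blast
  have e: "hprod m ws = hprod m (replicate a x @ rest)" by (rule hprod_perm[OF H r])
  show ?thesis
  proof (cases "rest = []")
    case True then show ?thesis using e xa by (simp add: hpow_def)
  next
    case False
    then have "hprod m ws = setmult m (hpow m x a) (hprod m rest)"
      using e a by (simp add: hprod_append[OF H] hpow_def)
    then show ?thesis using setmult_absorb(2)[OF H I xa] by simp
  qed
qed

lemma length_le_counts:
  "set ws \<subseteq> {x, y} \<Longrightarrow> length ws \<le> count (mset ws) x + count (mset ws) y"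
  by (induction ws) auto

lemma rad_add:
  assumes H: "mult_hyperring m" and I: "hyperideal m I"
    and a: "a \<ge> 1" and xa: "hpow m x a \<subseteq> I"
    and b: "b \<ge> 1" and yb: "hpow m y b \<subseteq> I"
  shows "hpow m (x + y) (a + b) \<subseteq> I"
proof -
  have "words m x y (a + b) \<subseteq> I"
  proof
    fix z assume "z \<in> words m x y (a + b)"
    then obtain ws where ws: "length ws = a + b" "set ws \<subseteq> {x, y}" "z \<in> hprod m ws"
      unfolding words_def by blast
    have "count (mset ws) x \<ge> a \<or> count (mset ws) y \<ge> b"
      using length_le_counts[OF ws(2)] ws(1) by linarith
    then have "hprod m ws \<subseteq> I"
    proof
      assume "count (mset ws) x \<ge> a"
      then show ?thesis by (rule word_in_ideal[OF H I a xa])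
    next
      assume "count (mset ws) y \<ge> b"
      then show ?thesis by (rule word_in_ideal[OF H I b yb])
    qed
    then show "z \<in> I" using ws(3) by blast
  qed
  have s: "hpow m (x + y) (a + b) \<subseteq> addclos (words m x y (a + b))"
    by (rule hpow_sum_addclos[OF H]) (use a in simp)
  show ?thesis
  proof
    fix z assume "z \<in> hpow m (x + y) (a + b)"
    then have "z \<in> addclos (words m x y (a + b))" by (rule subsetD[OF s])
    then show "z \<in> I" by (rule addclos_sub[OF I \<open>words m x y (a + b) \<subseteq> I\<close>])
  qed
qed


lemma hpow_identity:
  assumes u: "hyperring_identity m u"
  shows "n \<ge> 1 \<Longrightarrow> u \<in> hpow m u n"
proof (induction n rule: nat_induct_at_least)
  case base then show ?case by (simp add: hpow_one)
next
  case (Suc n)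
  have "u \<in> m u u" using u unfolding hyperring_identity_def by blast
  then show ?case using Suc by (auto simp: hpow_Suc setmult_def)
qed

theorem mainTheorem5:
  fixes m :: "'a::ab_group_add \<Rightarrow> 'a \<Rightarrow> 'a set" and u :: 'a and I :: "'a set"
  assumes "mult_hyperring m"
    and "hyperring_identity m u"
    and "\<forall>J. hyperideal m J \<longrightarrow> C_hyperideal m J"
    and "one_absorbing_primary m u I"
  shows "prime_hyperideal m (hrad m I)"
proof -
  note H = assms(1)
  have I: "hyperideal m I" and Ine: "I \<noteq> UNIV"
    and abs1: "\<And>x y z. \<not> hunit m u x \<Longrightarrow> \<not> hunit m u y \<Longrightarrow> \<not> hunit m u z \<Longrightarrow>
        hprod m [x, y, z] \<subseteq> I \<Longrightarrow> m x y \<subseteq> I \<or> z \<in> hrad m I"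
    using assms(4) unfolding one_absorbing_primary_def by blast+
  have C: "C_hyperideal m I" using assms(3) I by blast
  have Cl: "\<And>rs. hprod m rs \<inter> I \<noteq> {} \<Longrightarrow> hprod m rs \<subseteq> I"
    using C unfolding C_hyperideal_def by blast
  note Ip = hyperideal_props[OF I]
  have radI: "\<And>r n. n \<ge> 1 \<Longrightarrow> hpow m r n \<subseteq> I \<Longrightarrow> r \<in> hrad m I"
    unfolding hrad_def by blast
  have radE: "\<And>r. r \<in> hrad m I \<Longrightarrow> \<exists>n\<ge>1. hpow m r n \<subseteq> I"
    unfolding hrad_def by blast
  have hid: "hyperideal m (hrad m I)"
    unfolding hyperideal_def
  proof (intro conjI allI impI ballI)
    have "0 \<in> hrad m I" using radI[of 1 0] Ip(1) by (simp add: hpow_one)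
    then show "hrad m I \<noteq> {}" by blast
  next
    fix p q assume p: "p \<in> hrad m I" and q: "q \<in> hrad m I"
    obtain a where a: "a \<ge> 1" "hpow m p a \<subseteq> I" using radE[OF p] by blast
    obtain b where b: "b \<ge> 1" "hpow m q b \<subseteq> I" using radE[OF q] by blast
    have "hpow m (- q) b \<subseteq> hpow m q b \<union> uminus ` hpow m q b" using hpow_neg[OF H b(1)] .
    also have "\<dots> \<subseteq> I" using b(2) Ip(2) by blast
    finally have nb: "hpow m (- q) b \<subseteq> I" .
    have "hpow m (p + - q) (a + b) \<subseteq> I" by (rule rad_add[OF H I a(1) a(2) b(1) nb])
    then have "hpow m (p - q) (a + b) \<subseteq> I" by simp
    then show "p - q \<in> hrad m I" using radI[of "a + b"] a by simp
  next
    fix r a assume a: "a \<in> hrad m I"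
    obtain n where n: "n \<ge> 1" "hpow m a n \<subseteq> I" using radE[OF a] by blast
    show "m r a \<subseteq> hrad m I"
    proof
      fix c assume c: "c \<in> m r a"
      have "hpow m c n \<subseteq> hprod m (replicate n r @ replicate n a)" by (rule hpow_prod[OF H c n(1)])
      also have "\<dots> = setmult m (hpow m r n) (hpow m a n)"
        using n(1) by (simp add: hprod_append[OF H] hpow_def)
      also have "\<dots> \<subseteq> I" by (rule setmult_absorb(1)[OF H I n(2)])
      finally show "c \<in> hrad m I" using radI n(1) by blast
    qed
  qed
  have hprop: "hrad m I \<noteq> UNIV"
  proof
    assume "hrad m I = UNIV"
    then have "u \<in> hrad m I" by blast
    then obtain n where n: "n \<ge> 1" "hpow m u n \<subseteq> I" using radE by blast
    then have uI: "u \<in> I" using hpow_identity[OF assms(2) n(1)] by blast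
    have "\<And>a. a \<in> I"
    proof -
      fix a
      have "a \<in> m a u" using assms(2) unfolding hyperring_identity_def by blast
      then show "a \<in> I" using Ip(4)[OF uI] by blast
    qed
    then show False using Ine by blast
  qed
  have hprime: "\<And>x y. m x y \<subseteq> hrad m I \<Longrightarrow> x \<in> hrad m I \<or> y \<in> hrad m I"
  proof -
    fix x y assume xy: "m x y \<subseteq> hrad m I"
    obtain c where c: "c \<in> m x y" using mh_ne[OF H] by blast
    then have "c \<in> hrad m I" using xy by blast
    then obtain k where k: "k \<ge> 1" "hpow m c k \<subseteq> I" using radE by blast
    have ck: "hpow m c k \<subseteq> hprod m (replicate k x @ replicate k y)" by (rule hpow_prod[OF H c k(1)])
    have "hpow m c k \<noteq> {}" using hpow_nonempty[OF H k(1)] .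
    then have "hprod m (replicate k x @ replicate k y) \<inter> I \<noteq> {}" using ck k(2) by blast
    then have HI: "hprod m (replicate k x @ replicate k y) \<subseteq> I" by (rule Cl)
    have Heq: "hprod m (replicate k x @ replicate k y) = setmult m (hpow m x k) (hpow m y k)"
      using k(1) by (simp add: hprod_append[OF H] hpow_def)
    obtain a where a: "a \<in> hpow m x k" using hpow_nonempty[OF H k(1)] by blast
    obtain b where b: "b \<in> hpow m y k" using hpow_nonempty[OF H k(1)] by blast
    have "m a b \<subseteq> setmult m (hpow m x k) (hpow m y k)" using a b unfolding setmult_def by blast
    then have abI: "m a b \<subseteq> I" using HI Heq by simp
    have Cx: "\<And>j. j \<ge> 1 \<Longrightarrow> hpow m x j \<inter> I \<noteq> {} \<Longrightarrow> x \<in> hrad m I"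
      using C_hpow[OF C] radI by blast
    have Cy: "\<And>j. j \<ge> 1 \<Longrightarrow> hpow m y j \<inter> I \<noteq> {} \<Longrightarrow> y \<in> hrad m I"
      using C_hpow[OF C] radI by blast
    show "x \<in> hrad m I \<or> y \<in> hrad m I"
    proof (cases "hunit m u a")
      case True
      then obtain a' where a': "u \<in> m a a'" unfolding hunit_def by blast
      have "b \<in> m b u" using assms(2) unfolding hyperring_identity_def by blast
      also have "m b u \<subseteq> setmult m {b} (m a a')" using a' unfolding setmult_def by blast
      also have "setmult m {b} (m a a') = setmult m (m b a) {a'}" using mh_assoc[OF H] by simp
      also have "\<dots> \<subseteq> I" using setmult_absorb(2)[OF H I] abI mh_comm[OF H, of b a] by simp
      finally have "b \<in> I" .
      then have "y \<in> hrad m I" using Cy[OF k(1)] b by blast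
      then show ?thesis by blast
    next
      case na: False
      show ?thesis
      proof (cases "hunit m u b")
        case True
        then obtain b' where b': "u \<in> m b b'" unfolding hunit_def by blast
        have "a \<in> m a u" using assms(2) unfolding hyperring_identity_def by blast
        also have "m a u \<subseteq> setmult m {a} (m b b')" using b' unfolding setmult_def by blast
        also have "setmult m {a} (m b b') = setmult m (m a b) {b'}" using mh_assoc[OF H] by simp
        also have "\<dots> \<subseteq> I" using setmult_absorb(2)[OF H I] abI by simp
        finally have "a \<in> I" .
        then have "x \<in> hrad m I" using Cx[OF k(1)] a by blast
        then show ?thesis by blast
      next
        case nb: False
        have "hprod m [a, a, b] = setmult m {a} (m a b)" by (simp add: setmult_single)
        also have "\<dots> \<subseteq> I" by (rule setmult_absorb(1)[OF H I abI])
        finally have "m a a \<subseteq> I \<or> b \<in> hrad m I" using abs1[OF na na nb] by blast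
        then show ?thesis
        proof
          assume aa: "m a a \<subseteq> I"
          have "m a a \<subseteq> setmult m (hpow m x k) (hpow m x k)" using a unfolding setmult_def by blast
          also have "\<dots> = hpow m x (k + k)" using hpow_add[OF H k(1) k(1)] by simp
          finally have "hpow m x (k + k) \<inter> I \<noteq> {}" using aa mh_ne[OF H, of a a] by blast
          then have "x \<in> hrad m I" using Cx[of "k + k"] k(1) by simp
          then show ?thesis by blast
        next
          assume "b \<in> hrad m I"
          then obtain j where j: "j \<ge> 1" "hpow m b j \<subseteq> I" using radE by blast
          have "hpow m b j \<subseteq> hpow m y (k * j)" by (rule hpow_pow[OF H b k(1) j(1)])
          moreover have "hpow m b j \<noteq> {}" using hpow_nonempty[OF H j(1)] .
          ultimately have "hpow m y (k * j) \<inter> I \<noteq> {}" using j(2) by blast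
          moreover have "k * j \<ge> 1" using k(1) j(1) by simp
          ultimately have "y \<in> hrad m I" using Cy by blast
          then show ?thesis by blast
        qed
      qed
    qed
  qed
  show ?thesis unfolding prime_hyperideal_def using hid hprop hprime by blast
qed

end
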